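(* Assume the setting of the context. If Assumption (A5) holds, then for every compact interval $I\subset(0,\infty)$ and $r>0$, \[\lim_{\delta\to0}\limsup_{n\to\infty}\sup_{\substack{x,y,z\in B_{G^n}(\rho,\alpha(n)r):\\ d_{G^n}(y,z)\le\alpha(n)\delta}}\sup_{t\in I}\beta(n)\left|q^n_{\lfloor\gamma(n)t\rfloor}(x,y)-q^n_{\lfloor\gamma(n)t\rfloor}(x,z)\right|=0.\]
   Context: Let $(E,d_E)$ be a metric space and $F\subseteq E$ such that $F\cap\overline{B}_E(x,r)$ is compact for all $x\in E$, $r>0$ ($\overline{B}_E$, $B_E$ closed and open balls in $E$). Let $d_F:=d_E|_{F\times F}$, $\rho\in F$, and $\nu$ a Radon measure of full support on $(F,d_F)$ (extended to $E$ by $\nu(A):=\nu(A\cap F)$). For a locally finite connected graph $G$ with at least two vertices: $d_G$ is the shortest-path metric, $B_G(x,r)$ the open $d_G$-ball; $\mu^G$ a symmetric weight with $\mu^G_{xy}>0$ iff $\{x,y\}$ is an edge; $\mu^G_x:=\sum_y\mu^G_{xy}$; $\nu^G(A):=\sum_{x\in A}\mu^G_x$; $X^G$ the discrete time simple random walk with $P_G(x,y)=\mu^G_{xy}/\mu^G_x$, law $\mathbf{P}^G_x$; $p^G_m(x,y):=\mathbf{P}^G_x(X^G_m=y)/\nu^G(\{y\})$, $q^G_m(x,y):=\frac12(p^G_m+p^G_{m+1})(x,y)$; generator $\mathcal{L}_Gf(x)=\sum_yP_G(x,y)(f(y)-f(x))$; $(f,g)_G:=\sum_xf(x)g(x)\nu^G(\{x\})$;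 $\mathcal{E}_G(f,g):=-(\mathcal{L}_Gf,g)_G$ on $\mathcal{F}_G:=\{f:\mathcal{E}_G(f,f)<\infty\}$; resistance metric $R_G(x,y):=\sup\{|f(x)-f(y)|^2/\mathcal{E}_G(f,f):f\in\mathcal{F}_G,\mathcal{E}_G(f,f)>0\}$. $(G^n)_{n\ge1}$ are such graphs with $V(G^n)\subseteq E$ and distinguished vertex $\rho$; $\nu^n:=\nu^{G^n}$, $q^n:=q^{G^n}$. $(\alpha(n)),(\beta(n)),(\gamma(n))$ are non-negative sequences diverging to $\infty$. Assumption (A5): (i) there is $c>0$ with $d_{G^n}(x,y)\ge c\alpha(n)d_E(x,y)$ for all $x,y\in V(G^n)$, $n\ge1$, and a non-negative $\tilde\alpha(n)=o(\alpha(n))$ such that for each $r>0$ there are $c'<\infty$, $n_0$ with $d_{G^n}(x,y)\le c'\alpha(n)d_E(x,y)+\tilde\alpha(n)$ for all $x,y\in V(G^n)\cap B_E(\rho,r)$, $n\ge n_0$; (ii) for every $x\in F$, $r>0$, $\lim_n\beta(n)^{-1}\nu^n(B_E(x,r))=\nu(B_E(x,r))$; (iii) for some $\kappa\in(0,\infty)$ there exist constants $c_1,c_2,c_3\in(0,\infty)$ and an integer $n_0$ such that $R_{G^n}(x,y)\le c_1d_{G^n}(x,y)^\kappa$ for all $x,y\in V(G^n)$, and $c_2\gamma(n)\le\alpha(n)^\kappa\beta(n)\le c_3\gamma(n)$, for all $n\ge n_0$. *)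

theory Defs
  imports "HOL-Analysis.Analysis" "HOL-Library.Landau_Symbols"
begin

definition adj :: "('a \<Rightarrow> 'a \<Rightarrow> real) \<Rightarrow> ('a \<times> 'a) set" where
  "adj \<mu> = {(x, y). \<mu> x y > 0}"

definition weighted_graph :: "'a set \<Rightarrow> ('a \<Rightarrow> 'a \<Rightarrow> real) \<Rightarrow> bool" where
  "weighted_graph V \<mu> \<longleftrightarrow>
     (\<forall>x y. \<mu> x y = \<mu> y x) \<and> (\<forall>x y. 0 \<le> \<mu> x y) \<and>
     (\<forall>x y. \<mu> x y > 0 \<longrightarrow> x \<in> V \<and> y \<in> V) \<and>
     (\<forall>x\<in>V. finite {y. \<mu> x y > 0}) \<and>
     (\<forall>x\<in>V. \<forall>y\<in>V. (x, y) \<in> (adj \<mu>)\<^sup>*) \<and>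
     (\<exists>x\<in>V. \<exists>y\<in>V. x \<noteq> y)"

definition gdist :: "('a \<Rightarrow> 'a \<Rightarrow> real) \<Rightarrow> 'a \<Rightarrow> 'a \<Rightarrow> nat" where
  "gdist \<mu> x y = (LEAST k. (x, y) \<in> (adj \<mu>) ^^ k)"

definition gball :: "'a set \<Rightarrow> ('a \<Rightarrow> 'a \<Rightarrow> real) \<Rightarrow> 'a \<Rightarrow> real \<Rightarrow> 'a set" where
  "gball V \<mu> x r = {y \<in> V. real (gdist \<mu> x y) < r}"

definition muv :: "('a \<Rightarrow> 'a \<Rightarrow> real) \<Rightarrow> 'a \<Rightarrow> real" where
  "muv \<mu> x = (\<Sum>y\<in>{y. \<mu> x y > 0}. \<mu> x y)"

definition nuG :: "'a set \<Rightarrow> ('a \<Rightarrow> 'a \<Rightarrow> real) \<Rightarrow> 'a set \<Rightarrow> ennreal" where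
  "nuG V \<mu> A = (\<Sum>\<^sub>\<infinity>x\<in>A \<inter> V. ennreal (muv \<mu> x))"

definition Ptr :: "('a \<Rightarrow> 'a \<Rightarrow> real) \<Rightarrow> 'a \<Rightarrow> 'a \<Rightarrow> real" where
  "Ptr \<mu> x y = \<mu> x y / muv \<mu> x"

primrec walk_prob :: "('a \<Rightarrow> 'a \<Rightarrow> real) \<Rightarrow> nat \<Rightarrow> 'a \<Rightarrow> 'a \<Rightarrow> real" where
  "walk_prob \<mu> 0 x y = (if x = y then 1 else 0)"
| "walk_prob \<mu> (Suc m) x y = (\<Sum>z\<in>{z. \<mu> x z > 0}. Ptr \<mu> x z * walk_prob \<mu> m z y)"

definition hk :: "('a \<Rightarrow> 'a \<Rightarrow> real) \<Rightarrow> nat \<Rightarrow> 'a \<Rightarrow> 'a \<Rightarrow> real" where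
  "hk \<mu> m x y = walk_prob \<mu> m x y / muv \<mu> y"

definition qhk :: "('a \<Rightarrow> 'a \<Rightarrow> real) \<Rightarrow> nat \<Rightarrow> 'a \<Rightarrow> 'a \<Rightarrow> real" where
  "qhk \<mu> m x y = (hk \<mu> m x y + hk \<mu> (Suc m) x y) / 2"

definition energy :: "('a \<Rightarrow> 'a \<Rightarrow> real) \<Rightarrow> ('a \<Rightarrow> real) \<Rightarrow> ennreal" where
  "energy \<mu> f = (\<Sum>\<^sub>\<infinity>(x, y)\<in>UNIV. ennreal (\<mu> x y * (f x - f y)\<^sup>2)) / 2"

definition resistance :: "('a \<Rightarrow> 'a \<Rightarrow> real) \<Rightarrow> 'a \<Rightarrow> 'a \<Rightarrow> ereal" where
  "resistance \<mu> x y =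
     Sup {ereal ((f x - f y)\<^sup>2 / enn2real (energy \<mu> f)) | f. 0 < energy \<mu> f \<and> energy \<mu> f < top}"

definition radon_full_support :: "'a::metric_space set \<Rightarrow> 'a measure \<Rightarrow> bool" where
  "radon_full_support F \<nu> \<longleftrightarrow>
     sets \<nu> = sets borel \<and>
     (\<forall>A\<in>sets borel. emeasure \<nu> A = emeasure \<nu> (A \<inter> F)) \<and>
     (\<forall>K. compact K \<longrightarrow> emeasure \<nu> K < \<infinity>) \<and>
     (\<forall>A\<in>sets borel. emeasure \<nu> A = (SUP K\<in>{K. compact K \<and> K \<subseteq> A}. emeasure \<nu> K)) \<and>
     (\<forall>x\<in>F. \<forall>r>0. emeasure \<nu> (ball x r) > 0)"

end

theory Submission
  imports Defs
begin

locale wg =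
  fixes V :: "'a set" and \<mu> :: "'a \<Rightarrow> 'a \<Rightarrow> real"
  assumes wg: "weighted_graph V \<mu>"
begin

abbreviation "N x \<equiv> {y. 0 < \<mu> x y}"
abbreviation "\<pi> \<equiv> muv \<mu>"
definition "Reach m x = (adj \<mu> ^^ m) `` {x}"

lemma sym: "\<mu> x y = \<mu> y x" using wg unfolding weighted_graph_def by blast
lemma nonneg: "0 \<le> \<mu> x y" using wg unfolding weighted_graph_def by blast
lemma inV: "0 < \<mu> x y \<Longrightarrow> x \<in> V \<and> y \<in> V" using wg unfolding weighted_graph_def by blast
lemma finN: "finite (N x)"
proof (cases "x \<in> V")
  case True then show ?thesis using wg unfolding weighted_graph_def by blast
next
  case False then have "N x = {}" using inV by blast
  then show ?thesis by simp
qed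
lemma conn: "x \<in> V \<Longrightarrow> y \<in> V \<Longrightarrow> (x, y) \<in> (adj \<mu>)\<^sup>*" using wg unfolding weighted_graph_def by blast
lemma two: "\<exists>x\<in>V. \<exists>y\<in>V. x \<noteq> y" using wg unfolding weighted_graph_def by blast

lemma zero_off: "y \<notin> N x \<Longrightarrow> \<mu> x y = 0" using nonneg[of x y] by simp
lemma Ptr_off: "\<not> 0 < \<mu> x y \<Longrightarrow> Ptr \<mu> x y = 0" using zero_off[of y x] by (simp add: Ptr_def)
lemma mu_notV: "x \<notin> V \<Longrightarrow> \<mu> x y = 0" using inV zero_off by blast

lemma adj_iff: "(x, y) \<in> adj \<mu> \<longleftrightarrow> 0 < \<mu> x y" by (simp add: adj_def)

lemma pi_sum: "finite W \<Longrightarrow> N x \<subseteq> W \<Longrightarrow> \<pi> x = (\<Sum>y\<in>W. \<mu> x y)"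
  unfolding muv_def by (rule sum.mono_neutral_left) (auto intro: zero_off)

lemma pi_nonneg: "0 \<le> \<pi> x" unfolding muv_def by (simp add: sum_nonneg nonneg)

lemma mu_le_pi: "\<mu> x y \<le> \<pi> x"
proof (cases "0 < \<mu> x y")
  case True then show ?thesis unfolding muv_def
    using member_le_sum[of y "N x" "\<mu> x"] finN nonneg by auto
next
  case False then show ?thesis using pi_nonneg nonneg[of x y] by simp
qed

lemma notV_N: "x \<notin> V \<Longrightarrow> N x = {}" using inV by blast
lemma pi_notV: "x \<notin> V \<Longrightarrow> \<pi> x = 0" unfolding muv_def using notV_N by simp

lemma pi_pos: assumes "x \<in> V" shows "0 < \<pi> x"
proof -
  obtain y where y: "y \<in> V" "y \<noteq> x" using two by metis
  have "(x, y) \<in> (adj \<mu>)\<^sup>*" using conn assms y by blast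
  then obtain w where "(x, w) \<in> adj \<mu>" using y(2)
    by (metis converse_rtranclE)
  then have "0 < \<mu> x w" by (simp add: adj_iff)
  then show ?thesis using mu_le_pi[of x w] by linarith
qed

lemma pi_pos_iff: "0 < \<pi> x \<longleftrightarrow> x \<in> V" using pi_pos pi_notV by force

lemma mu_pi0: "\<pi> x = 0 \<Longrightarrow> \<mu> x y = 0" using mu_le_pi[of x y] nonneg[of x y] by linarith

lemma Ptr_sum: assumes "x \<in> V" shows "(\<Sum>z\<in>N x. Ptr \<mu> x z) = 1"
  using pi_pos[OF assms] unfolding Ptr_def by (simp add: sum_divide_distrib[symmetric] muv_def)

lemma Reach_0[simp]: "Reach 0 x = {x}" by (simp add: Reach_def)
lemma Reach_Suc2: "Reach (Suc m) x = (\<Union>z\<in>N x. Reach m z)"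
proof (rule set_eqI)
  fix y
  show "y \<in> Reach (Suc m) x \<longleftrightarrow> y \<in> (\<Union>z\<in>N x. Reach m z)"
    unfolding Reach_def Image_singleton_iff
  proof
    assume "(x, y) \<in> adj \<mu> ^^ Suc m"
    then obtain z where "(x, z) \<in> adj \<mu>" "(z, y) \<in> adj \<mu> ^^ m" using relpow_Suc_D2 by metis
    then show "y \<in> (\<Union>z\<in>N x. (adj \<mu> ^^ m) `` {z})" by (auto simp: adj_iff)
  next
    assume "y \<in> (\<Union>z\<in>N x. (adj \<mu> ^^ m) `` {z})"
    then obtain z where "0 < \<mu> x z" "(z, y) \<in> adj \<mu> ^^ m" by auto
    then show "(x, y) \<in> adj \<mu> ^^ Suc m" by (intro relpow_Suc_I2) (auto simp: adj_iff)
  qed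
qed
lemma Reach_fin: "finite (Reach m x)"
  by (induction m arbitrary: x) (auto simp: Reach_Suc2 finN)
lemma Reach_step: "y \<in> Reach m x \<Longrightarrow> 0 < \<mu> y w \<Longrightarrow> w \<in> Reach (Suc m) x"
  unfolding Reach_def by (auto simp: adj_iff intro: relpow_Suc_I)
lemma Reach_sub: "z \<in> N x \<Longrightarrow> Reach m z \<subseteq> Reach (Suc m) x"
  by (auto simp: Reach_Suc2)
lemma Reach_V: "x \<in> V \<Longrightarrow> Reach m x \<subseteq> V"
proof (induction m arbitrary: x)
  case 0 then show ?case by simp
next
  case (Suc m) then show ?case by (auto simp: Reach_Suc2 dest: inV)
qed

lemma wp_Suc_W: "finite W \<Longrightarrow> N x \<subseteq> W \<Longrightarrow>
   walk_prob \<mu> (Suc m) x y = (\<Sum>z\<in>W. Ptr \<mu> x z * walk_prob \<mu> m z y)"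
  by simp (rule sum.mono_neutral_left, auto simp: Ptr_off)

lemma wp_nonneg: "0 \<le> walk_prob \<mu> m x y"
  by (induction m arbitrary: x) (auto intro!: sum_nonneg mult_nonneg_nonneg simp: Ptr_def nonneg pi_nonneg)

lemma wp_supp: "walk_prob \<mu> m x y \<noteq> 0 \<Longrightarrow> y \<in> Reach m x"
proof (induction m arbitrary: x)
  case 0 then show ?case by (simp split: if_splits)
next
  case (Suc m)
  then obtain z where "z \<in> N x" "walk_prob \<mu> m z y \<noteq> 0"
    by (auto elim!: sum.not_neutral_contains_not_neutral)
  then show ?case using Suc.IH Reach_Suc2 by blast
qed

lemma wp_0_out: "y \<notin> Reach m x \<Longrightarrow> walk_prob \<mu> m x y = 0" using wp_supp by blast

lemma CK: "finite W \<Longrightarrow> Reach j x \<subseteq> W \<Longrightarrow>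
  walk_prob \<mu> (j + i) x y = (\<Sum>z\<in>W. walk_prob \<mu> j x z * walk_prob \<mu> i z y)"
proof (induction j arbitrary: x)
  case 0
  then have "x \<in> W" by simp
  have "(\<Sum>z\<in>W. walk_prob \<mu> 0 x z * walk_prob \<mu> i z y) = (\<Sum>z\<in>W. if z = x then walk_prob \<mu> i x y else 0)"
    by (intro sum.cong) auto
  then show ?case using \<open>x \<in> W\<close> 0 by simp
next
  case (Suc j)
  have "walk_prob \<mu> (Suc j + i) x y = (\<Sum>z\<in>N x. Ptr \<mu> x z * walk_prob \<mu> (j+i) z y)" by simp
  also have "\<dots> = (\<Sum>z\<in>N x. Ptr \<mu> x z * (\<Sum>w\<in>W. walk_prob \<mu> j z w * walk_prob \<mu> i w y))"
  proof (intro sum.cong refl)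
    fix z assume "z \<in> N x"
    then have "Reach j z \<subseteq> W" using Reach_sub[of z x j] Suc.prems by blast
    then show "Ptr \<mu> x z * walk_prob \<mu> (j + i) z y = Ptr \<mu> x z * (\<Sum>w\<in>W. walk_prob \<mu> j z w * walk_prob \<mu> i w y)"
      using Suc.IH[of z] Suc.prems(1) by simp
  qed
  also have "\<dots> = (\<Sum>w\<in>W. (\<Sum>z\<in>N x. Ptr \<mu> x z * walk_prob \<mu> j z w) * walk_prob \<mu> i w y)"
    unfolding sum_distrib_left sum_distrib_right by (subst sum.swap) (simp add: mult.assoc)
  also have "\<dots> = (\<Sum>w\<in>W. walk_prob \<mu> (Suc j) x w * walk_prob \<mu> i w y)" by simp
  finally show ?case .
qed

lemma wp_total: "x \<in> V \<Longrightarrow> finite W \<Longrightarrow> Reach m x \<subseteq> W \<Longrightarrow> (\<Sum>y\<in>W. walk_prob \<mu> m x y) = 1"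
proof (induction m arbitrary: x)
  case 0 then show ?case by simp
next
  case (Suc m)
  have "(\<Sum>y\<in>W. walk_prob \<mu> (Suc m) x y) = (\<Sum>z\<in>N x. Ptr \<mu> x z * (\<Sum>y\<in>W. walk_prob \<mu> m z y))"
    unfolding sum_distrib_left by (simp, subst sum.swap, simp)
  also have "\<dots> = (\<Sum>z\<in>N x. Ptr \<mu> x z)"
  proof (intro sum.cong refl)
    fix z assume z: "z \<in> N x"
    then have "z \<in> V" using inV by blast
    moreover have "Reach m z \<subseteq> W" using Reach_sub[OF z, of m] Suc.prems by blast
    ultimately show "Ptr \<mu> x z * (\<Sum>y\<in>W. walk_prob \<mu> m z y) = Ptr \<mu> x z"
      using Suc.IH Suc.prems by simp
  qed
  also have "\<dots> = 1" using Ptr_sum Suc.prems by simp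
  finally show ?case .
qed

lemma wp_one: "walk_prob \<mu> (Suc 0) w x = Ptr \<mu> w x"
  by (cases "0 < \<mu> w x") (simp_all add: if_distrib Ptr_off finN cong: if_cong)

lemma wp_notV: "x \<notin> V \<Longrightarrow> walk_prob \<mu> m x y = (if m = 0 \<and> x = y then 1 else 0)"
  by (cases m) (auto simp: notV_N)

end

context wg begin

lemma rev: "\<pi> x * walk_prob \<mu> m x y = \<pi> y * walk_prob \<mu> m y x"
proof (induction m arbitrary: x y)
  case 0 then show ?case by simp
next
  case (Suc m)
  show ?case
  proof (cases "x \<in> V")
    case False
    have "walk_prob \<mu> (Suc m) y x = (\<Sum>w\<in>Reach m y. walk_prob \<mu> m y w * walk_prob \<mu> (Suc 0) w x)"
      using CK[of "Reach m y" m y "Suc 0" x] Reach_fin by simp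
    also have "\<dots> = 0"
    proof (intro sum.neutral ballI)
      fix w have "\<mu> w x = 0" using sym[of w x] mu_notV[OF False] by simp
      then show "walk_prob \<mu> m y w * walk_prob \<mu> (Suc 0) w x = 0" unfolding wp_one by (simp add: Ptr_def)
    qed
    finally show ?thesis using False by (simp add: pi_notV)
  next
    case True
    define U where "U = N x \<union> Reach m y"
    have U: "finite U" "N x \<subseteq> U" "Reach m y \<subseteq> U" using finN Reach_fin U_def by auto
    have "\<pi> x * walk_prob \<mu> (Suc m) x y = (\<Sum>z\<in>U. \<mu> x z * walk_prob \<mu> m z y)"
      unfolding wp_Suc_W[OF U(1,2)] sum_distrib_left using pi_pos[OF True] by (simp add: Ptr_def)
    also have "\<dots> = (\<Sum>z\<in>U. \<pi> y * (walk_prob \<mu> m y z * Ptr \<mu> z x))"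
    proof (intro sum.cong refl)
      fix z assume "z \<in> U"
      show "\<mu> x z * walk_prob \<mu> m z y = \<pi> y * (walk_prob \<mu> m y z * Ptr \<mu> z x)"
      proof (cases "\<pi> z = 0")
        case True then show ?thesis by (simp add: mu_pi0 sym[of x z] Ptr_def)
      next
        case False
        then have "walk_prob \<mu> m z y = \<pi> y * walk_prob \<mu> m y z / \<pi> z"
          using Suc.IH[of z y] by (simp add: field_simps)
        then show ?thesis using False by (simp add: Ptr_def sym[of x z] field_simps)
      qed
    qed
    also have "\<dots> = \<pi> y * walk_prob \<mu> (Suc m) y x"
    proof -
      have "walk_prob \<mu> (Suc m) y x = (\<Sum>w\<in>U. walk_prob \<mu> m y w * Ptr \<mu> w x)"
        using CK[OF U(1,3), of "Suc 0" x] by (simp del: walk_prob.simps add: wp_one)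
      then show ?thesis by (simp add: sum_distrib_left)
    qed
    finally show ?thesis .
  qed
qed

lemma hk_sym: "hk \<mu> m x y = hk \<mu> m y x"
proof (cases "0 < \<pi> x \<and> 0 < \<pi> y")
  case True then show ?thesis using rev[of x m y] unfolding hk_def by (simp add: field_simps)
next
  case False
  then have "\<pi> x = 0 \<or> \<pi> y = 0" using pi_nonneg[of x] pi_nonneg[of y] by linarith
  then show ?thesis unfolding hk_def using pi_pos_iff[of x] pi_pos_iff[of y]
    by (auto simp: wp_notV)
qed

lemma hk_nonneg: "0 \<le> hk \<mu> m x y" unfolding hk_def by (simp add: wp_nonneg pi_nonneg)

lemma hk_pi: "x \<in> V \<Longrightarrow> hk \<mu> m x y * \<pi> y = walk_prob \<mu> m x y"
proof (cases "y \<in> V")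
  case True then show ?thesis using pi_pos[OF True] by (simp add: hk_def)
next
  case False
  assume x: "x \<in> V"
  then have "walk_prob \<mu> m x y = 0" using Reach_V[OF x, of m] False by (intro wp_0_out) blast
  then show ?thesis using False pi_notV by simp
qed

lemma hk_supp: "hk \<mu> m x y \<noteq> 0 \<Longrightarrow> y \<in> Reach m x"
  unfolding hk_def using wp_supp by fastforce

end

locale wg0 = wg +
  fixes x0 assumes x0: "x0 \<in> V"
begin

abbreviation "h k y \<equiv> hk \<mu> k x0 y"
abbreviation "a n \<equiv> hk \<mu> n x0 x0"

definition "WW K = (\<Union>k\<le>Suc K. Reach k x0)"
lemma WW_fin: "finite (WW K)" unfolding WW_def using Reach_fin by auto
lemma WW_Reach: "k \<le> Suc K \<Longrightarrow> Reach k x0 \<subseteq> WW K" unfolding WW_def by auto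
lemma WW_N: "k \<le> K \<Longrightarrow> y \<in> Reach k x0 \<Longrightarrow> N y \<subseteq> WW K"
  unfolding WW_def using Reach_step by fastforce

lemma h_out: "y \<notin> Reach k x0 \<Longrightarrow> h k y = 0" using hk_supp by blast

lemma G: assumes "finite W" "Reach i x0 \<subseteq> W"
  shows "(\<Sum>y\<in>W. h i y * h j y * \<pi> y) = a (i + j)"
proof -
  have "(\<Sum>y\<in>W. h i y * h j y * \<pi> y) = (\<Sum>y\<in>W. walk_prob \<mu> i x0 y * walk_prob \<mu> j y x0) / \<pi> x0"
    unfolding sum_divide_distrib
  proof (intro sum.cong refl)
    fix y
    have "h i y * h j y * \<pi> y = walk_prob \<mu> i x0 y * hk \<mu> j y x0"
      using hk_pi[OF x0, of i y] hk_sym[of j x0 y] by (simp add: algebra_simps)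
    then show "h i y * h j y * \<pi> y = walk_prob \<mu> i x0 y * walk_prob \<mu> j y x0 / \<pi> x0"
      by (simp add: hk_def)
  qed
  also have "\<dots> = a (i + j)" using CK[OF assms, of j x0] by (simp add: hk_def)
  finally show ?thesis .
qed

lemma G': assumes "finite W" "Reach j x0 \<subseteq> W"
  shows "(\<Sum>y\<in>W. h i y * h j y * \<pi> y) = a (i + j)"
  using G[OF assms, of i] by (simp add: mult.commute add.commute)

lemma inner: assumes "finite W" "Reach j x0 \<subseteq> W"
  shows "(\<Sum>z\<in>W. \<mu> y z * h j z) = \<pi> y * h (Suc j) y"
proof (cases "y \<in> V")
  case False then show ?thesis by (simp add: pi_notV mu_notV)
next
  case True
  define U where "U = W \<union> N y"
  have U: "finite U" "N y \<subseteq> U" "W \<subseteq> U" using assms finN U_def by auto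
  have "(\<Sum>z\<in>W. \<mu> y z * h j z) = (\<Sum>z\<in>U. \<mu> y z * h j z)"
  proof (intro sum.mono_neutral_left U(1) U(3) ballI)
    fix z assume "z \<in> U - W"
    then have "z \<notin> Reach j x0" using assms by blast
    then show "\<mu> y z * h j z = 0" using h_out by simp
  qed
  also have "\<dots> = \<pi> y / \<pi> x0 * (\<Sum>z\<in>U. Ptr \<mu> y z * walk_prob \<mu> j z x0)"
    unfolding sum_distrib_left
  proof (intro sum.cong refl)
    fix z
    have "h j z = hk \<mu> j z x0" by (rule hk_sym)
    also have "\<dots> = walk_prob \<mu> j z x0 / \<pi> x0" by (simp add: hk_def)
    finally show "\<mu> y z * h j z = \<pi> y / \<pi> x0 * (Ptr \<mu> y z * walk_prob \<mu> j z x0)"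
      using pi_pos[OF True] by (simp add: Ptr_def)
  qed
  also have "\<dots> = \<pi> y * h (Suc j) y"
    using wp_Suc_W[OF U(1,2), of j x0] hk_sym[of "Suc j" x0 y] by (simp add: hk_def)
  finally show ?thesis .
qed

lemma Q: assumes "finite W" "Reach i x0 \<subseteq> W" "Reach j x0 \<subseteq> W"
  shows "(\<Sum>y\<in>W. \<Sum>z\<in>W. h i y * \<mu> y z * h j z) = a (i + j + 1)"
proof -
  have "(\<Sum>y\<in>W. \<Sum>z\<in>W. h i y * \<mu> y z * h j z) = (\<Sum>y\<in>W. h i y * h (Suc j) y * \<pi> y)"
  proof (intro sum.cong refl)
    fix y
    have "(\<Sum>z\<in>W. h i y * \<mu> y z * h j z) = h i y * (\<Sum>z\<in>W. \<mu> y z * h j z)"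
      by (simp add: sum_distrib_left mult.assoc)
    also have "\<dots> = h i y * h (Suc j) y * \<pi> y" using inner[OF assms(1,3), of y] by simp
    finally show "(\<Sum>z\<in>W. h i y * \<mu> y z * h j z) = h i y * h (Suc j) y * \<pi> y" .
  qed
  also have "\<dots> = a (i + j + 1)" using G[OF assms(1,2)] by simp
  finally show ?thesis .
qed

definition "S2 f W = (\<Sum>y\<in>W. f y * f y * \<pi> y)"
definition "Qf f W = (\<Sum>y\<in>W. \<Sum>z\<in>W. f y * \<mu> y z * f z)"

lemma bilin: fixes A B :: real assumes "finite W" "Reach i x0 \<subseteq> W" "Reach j x0 \<subseteq> W"
  defines "f \<equiv> \<lambda>y. A * h i y + B * h j y"
  shows "S2 f W = A*A * a (2*i) + 2*A*B * a (i+j) + B*B * a (2*j)"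
    and "Qf f W = A*A * a (2*i+1) + 2*A*B * a (i+j+1) + B*B * a (2*j+1)"
proof -
  have e1: "a (2*i) = a (i+i)" "a (2*j) = a (j+j)" "a (2*i+1) = a (i+i+1)" "a (2*j+1) = a (j+j+1)"
    by (metis mult_2)+
  have e3: "a (j+i) = a (i+j)" "a (j+i+1) = a (i+j+1)" by (metis add.commute)+
  have "S2 f W = (\<Sum>y\<in>W. A*A*(h i y * h i y * \<pi> y) + A*B*(h i y * h j y * \<pi> y) + A*B*(h j y * h i y * \<pi> y) + B*B*(h j y * h j y * \<pi> y))"
    unfolding S2_def f_def by (intro sum.cong refl) (simp add: algebra_simps)
  also have "\<dots> = A*A*(\<Sum>y\<in>W. h i y * h i y * \<pi> y) + A*B*(\<Sum>y\<in>W. h i y * h j y * \<pi> y) + A*B*(\<Sum>y\<in>W. h j y * h i y * \<pi> y) + B*B*(\<Sum>y\<in>W. h j y * h j y * \<pi> y)"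
    by (simp only: sum.distrib sum_distrib_left)
  also have "\<dots> = A*A * a (i+i) + A*B * a (i+j) + A*B * a (j+i) + B*B * a (j+j)"
    using G[OF assms(1,2), of i] G[OF assms(1,2), of j] G[OF assms(1,3), of i] G[OF assms(1,3), of j] by simp
  finally have X: "S2 f W = A*A * a (i+i) + A*B * a (i+j) + A*B * a (j+i) + B*B * a (j+j)" .
  show "S2 f W = A*A * a (2*i) + 2*A*B * a (i+j) + B*B * a (2*j)"
    unfolding e1 using X[unfolded e3] by (simp add: algebra_simps)
  have "Qf f W = (\<Sum>y\<in>W. (\<Sum>z\<in>W. A*A*(h i y * \<mu> y z * h i z)) + (\<Sum>z\<in>W. A*B*(h i y * \<mu> y z * h j z)) + (\<Sum>z\<in>W. A*B*(h j y * \<mu> y z * h i z)) + (\<Sum>z\<in>W. B*B*(h j y * \<mu> y z * h j z)))"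
    unfolding Qf_def f_def sum.distrib[symmetric] by (intro sum.cong refl) (simp add: algebra_simps)
  also have "\<dots> = A*A*(\<Sum>y\<in>W. \<Sum>z\<in>W. h i y * \<mu> y z * h i z) + A*B*(\<Sum>y\<in>W. \<Sum>z\<in>W. h i y * \<mu> y z * h j z) + A*B*(\<Sum>y\<in>W. \<Sum>z\<in>W. h j y * \<mu> y z * h i z) + B*B*(\<Sum>y\<in>W. \<Sum>z\<in>W. h j y * \<mu> y z * h j z)"
    by (simp only: sum.distrib sum_distrib_left)
  also have "\<dots> = A*A * a (i+i+1) + A*B * a (i+j+1) + A*B * a (j+i+1) + B*B * a (j+j+1)"
    using Q[OF assms(1,2,2)] Q[OF assms(1,2,3)] Q[OF assms(1,3,2)] Q[OF assms(1,3,3)] by simp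
  finally have X: "Qf f W = A*A * a (i+i+1) + A*B * a (i+j+1) + A*B * a (j+i+1) + B*B * a (j+j+1)" .
  show "Qf f W = A*A * a (2*i+1) + 2*A*B * a (i+j+1) + B*B * a (2*j+1)"
    unfolding e1 using X[unfolded e3] by (simp add: algebra_simps)
qed

end

context wg0 begin

lemma sq_part: assumes "finite W" "S \<subseteq> W" "\<And>y. f y \<noteq> 0 \<Longrightarrow> y \<in> S" "\<And>y. y \<in> S \<Longrightarrow> N y \<subseteq> W"
  shows "(\<Sum>y\<in>W. \<Sum>z\<in>W. \<mu> y z * (f y * f y)) = S2 f W"
  unfolding S2_def
proof (intro sum.cong refl)
  fix y assume "y \<in> W"
  show "(\<Sum>z\<in>W. \<mu> y z * (f y * f y)) = f y * f y * \<pi> y"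
  proof (cases "f y = 0")
    case False
    then have "\<pi> y = (\<Sum>z\<in>W. \<mu> y z)" using assms by (intro pi_sum) auto
    then show ?thesis by (simp add: sum_distrib_right[symmetric] mult.commute)
  qed simp
qed

lemma dir: assumes "finite W" "S \<subseteq> W" "\<And>y. f y \<noteq> 0 \<Longrightarrow> y \<in> S" "\<And>y. y \<in> S \<Longrightarrow> N y \<subseteq> W"
  shows "(\<Sum>y\<in>W. \<Sum>z\<in>W. \<mu> y z * (f y - f z)\<^sup>2) = 2 * (S2 f W - Qf f W)"
    and "(\<Sum>y\<in>W. \<Sum>z\<in>W. \<mu> y z * (f y + f z)\<^sup>2) = 2 * (S2 f W + Qf f W)"
proof -
  have A: "(\<Sum>y\<in>W. \<Sum>z\<in>W. \<mu> y z * (f y * f y)) = S2 f W" by (rule sq_part[OF assms])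
  have B: "(\<Sum>y\<in>W. \<Sum>z\<in>W. \<mu> y z * (f z * f z)) = S2 f W"
    using A by (subst sum.swap) (simp add: sym)
  have C: "(\<Sum>y\<in>W. \<Sum>z\<in>W. \<mu> y z * (f y * f z)) = Qf f W"
    unfolding Qf_def by (simp add: algebra_simps)
  have "(\<Sum>y\<in>W. \<Sum>z\<in>W. \<mu> y z * (f y - f z)\<^sup>2) =
     (\<Sum>y\<in>W. \<Sum>z\<in>W. \<mu> y z * (f y * f y)) + (\<Sum>y\<in>W. \<Sum>z\<in>W. \<mu> y z * (f z * f z))
      - 2 * (\<Sum>y\<in>W. \<Sum>z\<in>W. \<mu> y z * (f y * f z))"
    by (simp add: sum.distrib[symmetric] sum_subtractf[symmetric] sum_distrib_left power2_eq_square algebra_simps)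
  then show "(\<Sum>y\<in>W. \<Sum>z\<in>W. \<mu> y z * (f y - f z)\<^sup>2) = 2 * (S2 f W - Qf f W)" using A B C by simp
  have "(\<Sum>y\<in>W. \<Sum>z\<in>W. \<mu> y z * (f y + f z)\<^sup>2) =
     (\<Sum>y\<in>W. \<Sum>z\<in>W. \<mu> y z * (f y * f y)) + (\<Sum>y\<in>W. \<Sum>z\<in>W. \<mu> y z * (f z * f z))
      + 2 * (\<Sum>y\<in>W. \<Sum>z\<in>W. \<mu> y z * (f y * f z))"
    by (simp add: sum.distrib[symmetric] sum_distrib_left power2_eq_square algebra_simps)
  then show "(\<Sum>y\<in>W. \<Sum>z\<in>W. \<mu> y z * (f y + f z)\<^sup>2) = 2 * (S2 f W + Qf f W)" using A B C by simp
qed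

definition "c j = a (2*j) + a (2*j+1)"
definition "D j = c j - c (Suc j)"

lemma c_nonneg: "0 \<le> c j" unfolding c_def using hk_nonneg by (simp add: add_nonneg_nonneg)

definition "Ev f W = (\<Sum>y\<in>W. \<Sum>z\<in>W. \<mu> y z * (f y - f z)\<^sup>2) / 2"

lemma supp_two: "(\<lambda>y. A * h i y + B * h j y) y \<noteq> 0 \<Longrightarrow> y \<in> Reach i x0 \<union> Reach j x0"
  using h_out by fastforce

lemma D_Ev: "D j = Ev (\<lambda>y. 1 * h j y + 1 * h (Suc j) y) (WW (Suc j))"
proof -
  define W where "W = WW (Suc j)"
  define f where "f = (\<lambda>y. 1 * h j y + 1 * h (Suc j) y)"
  have idx: "j * 2 = j + j" by simp
  define S where "S = Reach j x0 \<union> Reach (Suc j) x0"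
  have R: "Reach j x0 \<subseteq> W" "Reach (Suc j) x0 \<subseteq> W" using WW_Reach W_def by auto
  have fW: "finite W" using WW_fin W_def by simp
  have SW: "S \<subseteq> W" using R S_def by auto
  have sp: "\<And>y. f y \<noteq> 0 \<Longrightarrow> y \<in> S" unfolding f_def S_def by (rule supp_two)
  have NS: "\<And>y. y \<in> S \<Longrightarrow> N y \<subseteq> W" unfolding S_def W_def using WW_N[of j "Suc j"] WW_N[of "Suc j" "Suc j"] by auto
  have "Ev f W = S2 f W - Qf f W" unfolding Ev_def using dir(1)[OF fW SW sp NS] by simp
  also have "\<dots> = D j" unfolding f_def bilin[OF fW R] D_def c_def
    using idx by (simp add: algebra_simps idx)
  finally show ?thesis unfolding f_def W_def by simp
qed

lemma Ev_nonneg: "0 \<le> Ev f W" unfolding Ev_def by (auto intro!: sum_nonneg mult_nonneg_nonneg simp: nonneg)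

lemma D_nonneg: "0 \<le> D j" using D_Ev Ev_nonneg by simp

lemma D_mono: "D (Suc j) \<le> D j"
proof -
  define W where "W = WW (Suc (Suc j))"
  define f where "f = (\<lambda>y. 1 * h j y + (-1) * h (Suc (Suc j)) y)"
  have idx: "j * 2 = j + j" by simp
  define S where "S = Reach j x0 \<union> Reach (Suc (Suc j)) x0"
  have R: "Reach j x0 \<subseteq> W" "Reach (Suc (Suc j)) x0 \<subseteq> W" using WW_Reach W_def by auto
  have fW: "finite W" using WW_fin W_def by simp
  have SW: "S \<subseteq> W" using R S_def by auto
  have sp: "\<And>y. f y \<noteq> 0 \<Longrightarrow> y \<in> S" unfolding f_def S_def by (rule supp_two)
  have NS: "\<And>y. y \<in> S \<Longrightarrow> N y \<subseteq> W" unfolding S_def W_def using WW_N[of j "Suc (Suc j)"] WW_N[of "Suc (Suc j)" "Suc (Suc j)"] by auto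
  have "0 \<le> (\<Sum>y\<in>W. \<Sum>z\<in>W. \<mu> y z * (f y + f z)\<^sup>2)"
    by (auto intro!: sum_nonneg mult_nonneg_nonneg simp: nonneg)
  also have "\<dots> = 2 * (S2 f W + Qf f W)" using dir(2)[OF fW SW sp NS] .
  also have "\<dots> = 2 * (D j - D (Suc j))" unfolding f_def bilin[OF fW R] D_def c_def
    using idx by (simp add: algebra_simps idx)
  finally show ?thesis by simp
qed

lemma D_anti: "n \<le> m \<Longrightarrow> D m \<le> D n"
  using D_mono by (rule lift_Suc_antimono_le)

lemma D_tel: "real n * D (k + n) \<le> c k - c (k + n)"
proof (induction n)
  case 0 then show ?case by simp
next
  case (Suc n)
  have m: "D (k + Suc n) \<le> D (k + n)" using D_mono by simp
  have "real n * D (k + Suc n) \<le> real n * D (k + n)" using m by (intro mult_left_mono) auto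
  then have "real (Suc n) * D (k + Suc n) \<le> real n * D (k + n) + D (k + n)" using m by (simp add: algebra_simps)
  also have "\<dots> \<le> c k - c (k + n) + D (k + n)" using Suc.IH by simp
  also have "\<dots> = c k - c (k + Suc n)" unfolding D_def by simp
  finally show ?case .
qed

lemma D_bound: assumes "1 \<le> k" shows "D (2 * k) \<le> c k / k"
proof -
  have e: "2 * k = k + k" by simp
  have "real k * D (2 * k) \<le> c k" using D_tel[of k k] c_nonneg[of "k+k"] unfolding e by simp
  then show ?thesis using assms by (simp add: pos_le_divide_eq mult.commute)
qed

end

context wg begin

lemma adj_sym: "(x, y) \<in> adj \<mu> \<Longrightarrow> (y, x) \<in> adj \<mu>" by (simp add: adj_iff sym[of x y])

lemma relpow_sym: "(x, y) \<in> adj \<mu> ^^ k \<Longrightarrow> (y, x) \<in> adj \<mu> ^^ k"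
proof (induction k arbitrary: y)
  case 0 then show ?case by simp
next
  case (Suc k)
  then obtain w where "(x, w) \<in> adj \<mu> ^^ k" "(w, y) \<in> adj \<mu>" by (meson relpow_Suc_E)
  then show ?case using Suc.IH adj_sym by (meson relpow_Suc_I2)
qed

lemma gdist_rel: assumes "x \<in> V" "y \<in> V" shows "(x, y) \<in> adj \<mu> ^^ gdist \<mu> x y"
proof -
  obtain k where "(x, y) \<in> adj \<mu> ^^ k" using conn[OF assms] rtrancl_power by blast
  then show ?thesis unfolding gdist_def by (rule LeastI)
qed

lemma gdist_le: "(x, y) \<in> adj \<mu> ^^ k \<Longrightarrow> gdist \<mu> x y \<le> k"
  unfolding gdist_def by (rule Least_le)

lemma gdist_self: "gdist \<mu> x x = 0"
  using gdist_le[of x x 0] by simp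

lemma gdist_sym: assumes "x \<in> V" "y \<in> V" shows "gdist \<mu> x y = gdist \<mu> y x"
  using gdist_le[OF relpow_sym[OF gdist_rel[OF assms]]] gdist_le[OF relpow_sym[OF gdist_rel[OF assms(2,1)]]]
  by simp

lemma gdist_tri: assumes "x \<in> V" "y \<in> V" "z \<in> V" shows "gdist \<mu> x z \<le> gdist \<mu> x y + gdist \<mu> y z"
proof -
  have "(x, z) \<in> adj \<mu> ^^ (gdist \<mu> x y + gdist \<mu> y z)"
    unfolding relpow_add using gdist_rel[OF assms(1,2)] gdist_rel[OF assms(2,3)] by blast
  then show ?thesis by (rule gdist_le)
qed

end

context wg0 begin

lemma energy_eq:
  assumes fW: "finite W" and SW: "S \<subseteq> W" and sp: "\<And>y. f y \<noteq> 0 \<Longrightarrow> y \<in> S"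
    and NS: "\<And>y. y \<in> S \<Longrightarrow> N y \<subseteq> W"
  shows "energy \<mu> f = ennreal (Ev f W)"
proof -
  let ?g = "\<lambda>(x, y). ennreal (\<mu> x y * (f x - f y)\<^sup>2)"
  have "(\<Sum>\<^sub>\<infinity>p\<in>UNIV. ?g p) = (\<Sum>\<^sub>\<infinity>p\<in>W \<times> W. ?g p)"
  proof (rule infsum_cong_neutral)
    fix p assume "p \<in> UNIV - W \<times> W"
    obtain x y where p0: "p = (x, y)" by (cases p)
    then have p: "p = (x, y)" "\<not> (x \<in> W \<and> y \<in> W)" using \<open>p \<in> UNIV - W \<times> W\<close> by auto
    show "?g p = 0"
    proof (cases "0 < \<mu> x y")
      case False then have "\<mu> x y = 0" using nonneg[of x y] by linarith
      then show ?thesis using p by simp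
    next
      case True
      have "x \<notin> S"
      proof
        assume "x \<in> S" then have "x \<in> W" "y \<in> W" using SW NS True by auto
        then show False using p by blast
      qed
      moreover have "y \<notin> S"
      proof
        assume "y \<in> S" then have "y \<in> W" "x \<in> W" using SW NS True sym[of x y] by auto
        then show False using p by blast
      qed
      ultimately have "f x = 0" "f y = 0" using sp by blast+
      then show ?thesis using p by simp
    qed
  qed auto
  also have "\<dots> = (\<Sum>p\<in>W \<times> W. ?g p)" using fW by simp
  also have "\<dots> = ennreal (\<Sum>p\<in>W \<times> W. (\<lambda>(x, y). \<mu> x y * (f x - f y)\<^sup>2) p)"
    by (subst sum_ennreal[symmetric]) (auto simp: nonneg intro!: sum.cong)
  also have "(\<Sum>p\<in>W \<times> W. (\<lambda>(x, y). \<mu> x y * (f x - f y)\<^sup>2) p) = (\<Sum>x\<in>W. \<Sum>y\<in>W. \<mu> x y * (f x - f y)\<^sup>2)"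
    by (rule sum.cartesian_product[symmetric])
  finally have "(\<Sum>\<^sub>\<infinity>p\<in>UNIV. ?g p) = ennreal (2 * Ev f W)" unfolding Ev_def by simp
  moreover have "ennreal (2 * Ev f W) = ennreal (Ev f W) * 2"
    using Ev_nonneg[of f W] by (simp add: ennreal_mult mult.commute)
  ultimately show ?thesis unfolding energy_def
    using mult_divide_eq_ennreal[of "2::ennreal" "ennreal (Ev f W)"] by simp
qed

lemma resist:
  assumes fW: "finite W" and SW: "S \<subseteq> W" and sp: "\<And>y. f y \<noteq> 0 \<Longrightarrow> y \<in> S"
    and NS: "\<And>y. y \<in> S \<Longrightarrow> N y \<subseteq> W"
    and yz: "y \<in> V" "z \<in> V" and Rb: "resistance \<mu> y z \<le> ereal B"
  shows "(f y - f z)\<^sup>2 \<le> B * Ev f W"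
proof (cases "Ev f W = 0")
  case False
  then have pos: "0 < Ev f W" using Ev_nonneg[of f W] by linarith
  have en: "energy \<mu> f = ennreal (Ev f W)" by (rule energy_eq[OF fW SW sp NS])
  have "ereal ((f y - f z)\<^sup>2 / enn2real (energy \<mu> f)) \<le> resistance \<mu> y z"
    unfolding resistance_def
  proof (rule Sup_upper, intro CollectI exI conjI)
    show "ereal ((f y - f z)\<^sup>2 / enn2real (energy \<mu> f)) = ereal ((f y - f z)\<^sup>2 / enn2real (energy \<mu> f))" by (rule refl)
    show "0 < energy \<mu> f" "energy \<mu> f < top" using en pos by auto
  qed
  then have "ereal ((f y - f z)\<^sup>2 / enn2real (energy \<mu> f)) \<le> ereal B" using Rb by (rule order_trans)
  then have "(f y - f z)\<^sup>2 / enn2real (energy \<mu> f) \<le> B" by simp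
  then have "(f y - f z)\<^sup>2 / Ev f W \<le> B" using en pos by simp
  then show ?thesis using pos by (simp add: pos_divide_le_eq mult.commute)
next
  case True
  have edge: "f p = f q" if "0 < \<mu> p q" for p q
  proof (cases "p \<in> S \<or> q \<in> S")
    case True
    have "0 < \<mu> q p" using \<open>0 < \<mu> p q\<close> sym[of p q] by simp
    then have pq: "p \<in> W" "q \<in> W" using True SW NS[of p] NS[of q] \<open>0 < \<mu> p q\<close> by blast+
    have z: "(\<Sum>x\<in>W. \<Sum>y\<in>W. \<mu> x y * (f x - f y)\<^sup>2) = 0" using \<open>Ev f W = 0\<close> unfolding Ev_def by simp
    have "(\<Sum>y\<in>W. \<mu> p y * (f p - f y)\<^sup>2) = 0"
      using z fW pq by (subst (asm) sum_nonneg_eq_0_iff) (auto intro!: sum_nonneg simp: nonneg)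
    then have "\<mu> p q * (f p - f q)\<^sup>2 = 0"
      using fW pq by (subst (asm) sum_nonneg_eq_0_iff) (auto simp: nonneg)
    then show ?thesis using \<open>0 < \<mu> p q\<close> by simp
  next
    case False then have "f p = 0" "f q = 0" using sp by blast+
    then show ?thesis by simp
  qed
  have "(y, z) \<in> (adj \<mu>)\<^sup>*" using conn yz by blast
  then have "f y = f z"
  proof (induction rule: rtrancl_induct)
    case base then show ?case by simp
  next
    case (step b c) then show ?case using edge[of b c] by (simp add: adj_iff)
  qed
  then show ?thesis using True by simp
qed

end

context wg0 begin

lemma Fsetup:
  shows "finite (WW (Suc j))" "Reach j x0 \<union> Reach (Suc j) x0 \<subseteq> WW (Suc j)"
    "\<And>y. (\<lambda>y. 1 * h j y + 1 * h (Suc j) y) y \<noteq> 0 \<Longrightarrow> y \<in> Reach j x0 \<union> Reach (Suc j) x0"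
    "\<And>y. y \<in> Reach j x0 \<union> Reach (Suc j) x0 \<Longrightarrow> N y \<subseteq> WW (Suc j)"
proof -
  show "finite (WW (Suc j))" by (rule WW_fin)
  show "Reach j x0 \<union> Reach (Suc j) x0 \<subseteq> WW (Suc j)" using WW_Reach by auto
  show "\<And>y. (\<lambda>y. 1 * h j y + 1 * h (Suc j) y) y \<noteq> 0 \<Longrightarrow> y \<in> Reach j x0 \<union> Reach (Suc j) x0"
    by (rule supp_two)
  show "\<And>y. y \<in> Reach j x0 \<union> Reach (Suc j) x0 \<Longrightarrow> N y \<subseteq> WW (Suc j)"
    using WW_N[of j "Suc j"] WW_N[of "Suc j" "Suc j"] by auto
qed

lemma mass: assumes "m \<le> Suc K" shows "(\<Sum>y\<in>WW K. h m y * \<pi> y) = 1"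
proof -
  have "(\<Sum>y\<in>WW K. h m y * \<pi> y) = (\<Sum>y\<in>WW K. walk_prob \<mu> m x0 y)"
    using hk_pi[OF x0] by simp
  also have "\<dots> = 1" using wp_total[OF x0 WW_fin WW_Reach[OF assms]] .
  finally show ?thesis .
qed

lemma resF:
  assumes Rb: "\<forall>u\<in>V. \<forall>v\<in>V. resistance \<mu> u v \<le> ereal (c1 * real (gdist \<mu> u v) powr \<kappa>)"
    and yz: "y \<in> V" "z \<in> V"
  shows "((1 * h j y + 1 * h (Suc j) y) - (1 * h j z + 1 * h (Suc j) z))\<^sup>2 \<le> c1 * real (gdist \<mu> y z) powr \<kappa> * D j"
  using resist[OF Fsetup(1,2) Fsetup(3) Fsetup(4) yz, where B="c1 * real (gdist \<mu> y z) powr \<kappa>"] Rb yz D_Ev[of j]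
  by simp

lemma ondiag:
  assumes Rb: "\<forall>u\<in>V. \<forall>v\<in>V. resistance \<mu> u v \<le> ereal (c1 * real (gdist \<mu> u v) powr \<kappa>)"
    and c1: "0 \<le> c1" and ka: "0 < \<kappa>" and S0: "finite S0" "S0 \<subseteq> V"
    and gr: "\<forall>y\<in>S0. real (gdist \<mu> x0 y) \<le> r" and r: "0 \<le> r"
    and PS: "0 < (\<Sum>y\<in>S0. \<pi> y)" and k: "1 \<le> k"
  shows "c k \<le> 4 / (\<Sum>y\<in>S0. \<pi> y) + 4 * c1 * r powr \<kappa> / k"
proof -
  define PS where "PS = (\<Sum>y\<in>S0. \<pi> y)"
  define j where "j = 2 * k"
  define F where "F = (\<lambda>y. 1 * h j y + 1 * h (Suc j) y)"
  define Y where "Y = c k"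
  define B where "B = c1 * r powr \<kappa> * Y / k"
  have PSp: "0 < PS" using PS PS_def by simp
  have kp: "0 < real k" using k by simp
  have Fx0: "F x0 = Y" unfolding F_def Y_def c_def j_def by simp
  have Y0: "0 \<le> Y" unfolding Y_def by (rule c_nonneg)
  have Dj: "D j \<le> Y / k" unfolding j_def Y_def using D_bound[OF k] .
  have B0: "0 \<le> B" unfolding B_def using c1 Y0 kp by simp
  have Fnn: "0 \<le> F y" for y unfolding F_def using hk_nonneg by (simp add: add_nonneg_nonneg)
  have pt: "Y \<le> F y + sqrt B" if y: "y \<in> S0" for y
  proof -
    have yV: "y \<in> V" using y S0 by blast
    have g: "real (gdist \<mu> x0 y) powr \<kappa> \<le> r powr \<kappa>"
      using gr y ka by (intro powr_mono2) auto
    have "(F x0 - F y)\<^sup>2 \<le> c1 * real (gdist \<mu> x0 y) powr \<kappa> * D j"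
      unfolding F_def using resF[OF Rb x0 yV] .
    also have "\<dots> \<le> c1 * r powr \<kappa> * D j"
      using g c1 D_nonneg[of j] by (intro mult_right_mono mult_left_mono) auto
    also have "\<dots> \<le> c1 * r powr \<kappa> * (Y / k)"
      using Dj c1 by (intro mult_left_mono) auto
    finally have "(F x0 - F y)\<^sup>2 \<le> B" unfolding B_def by simp
    then have "F x0 - F y \<le> sqrt B" by (rule real_le_rsqrt)
    then show ?thesis using Fx0 by simp
  qed
  have tot: "(\<Sum>y\<in>S0. F y * \<pi> y) \<le> 2"
  proof -
    let ?W = "WW (Suc j)"
    have "(\<Sum>y\<in>S0. F y * \<pi> y) \<le> (\<Sum>y\<in>S0 \<union> ?W. F y * \<pi> y)"
      using S0 WW_fin Fnn pi_nonneg by (intro sum_mono2) auto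
    also have "\<dots> = (\<Sum>y\<in>?W. F y * \<pi> y)"
    proof (rule sum.mono_neutral_right)
      show "finite (S0 \<union> ?W)" using S0 WW_fin by simp
      show "?W \<subseteq> S0 \<union> ?W" by simp
      show "\<forall>y\<in>S0 \<union> ?W - ?W. F y * \<pi> y = 0"
      proof
        fix y assume "y \<in> S0 \<union> ?W - ?W"
        then have "y \<notin> Reach j x0 \<union> Reach (Suc j) x0" using Fsetup(2)[of j] by blast
        then have "F y = 0" using Fsetup(3)[of j y] unfolding F_def by blast
        then show "F y * \<pi> y = 0" by simp
      qed
    qed
    also have "\<dots> = (\<Sum>y\<in>?W. h j y * \<pi> y) + (\<Sum>y\<in>?W. h (Suc j) y * \<pi> y)"
      unfolding F_def by (simp add: sum.distrib algebra_simps)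
    also have "\<dots> = 2" using mass[of j "Suc j"] mass[of "Suc j" "Suc j"] by simp
    finally show ?thesis .
  qed
  have "Y * PS = (\<Sum>y\<in>S0. Y * \<pi> y)" unfolding PS_def by (simp add: sum_distrib_left)
  also have "\<dots> \<le> (\<Sum>y\<in>S0. (F y + sqrt B) * \<pi> y)"
    using pt pi_nonneg by (intro sum_mono mult_right_mono) auto
  also have "\<dots> = (\<Sum>y\<in>S0. F y * \<pi> y) + sqrt B * PS"
    unfolding PS_def by (simp add: sum.distrib distrib_right sum_distrib_left)
  also have "\<dots> \<le> 2 + sqrt B * PS" using tot by simp
  finally have "Y * PS \<le> 2 + sqrt B * PS" .
  then have Yb: "Y \<le> 2 / PS + sqrt B" using PSp by (simp add: field_simps)
  have "Y \<le> 4 / PS + 4 * c1 * r powr \<kappa> / k"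
  proof (cases "Y \<le> 4 / PS")
    case True
    moreover have "0 \<le> 4 * c1 * r powr \<kappa> / k" using c1 kp by simp
    ultimately show ?thesis by linarith
  next
    case False
    then have "Y / 2 < sqrt B" using Yb by (simp add: field_simps)
    then have "(Y / 2)\<^sup>2 < B" using Y0 B0
      by (metis real_sqrt_less_iff real_sqrt_abs abs_of_nonneg divide_nonneg_nonneg zero_le_numeral)
    define Q where "Q = 4 * (c1 * r powr \<kappa> / k)"
    have "(Y / 2)\<^sup>2 = Y * Y / 4" by (simp add: power2_eq_square)
    moreover have "B = Q * Y / 4" unfolding B_def Q_def by simp
    ultimately have "Y * Y < Q * Y" using \<open>(Y / 2)\<^sup>2 < B\<close> by simp
    moreover have "0 < Y" using False PSp by (smt (verit) divide_pos_pos)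
    ultimately have "Y < Q" using mult_less_cancel_right_pos[of Y Y Q] by simp
    then have "Y < 4 * (c1 * r powr \<kappa> / k)" unfolding Q_def .
    moreover have "0 \<le> 4 / PS" using PSp by simp
    moreover have "4 * (c1 * r powr \<kappa> / k) = 4 * c1 * r powr \<kappa> / k" by simp
    ultimately show ?thesis by linarith
  qed
  then show ?thesis unfolding Y_def PS_def .
qed

lemma main_graph:
  assumes Rb: "\<forall>u\<in>V. \<forall>v\<in>V. resistance \<mu> u v \<le> ereal (c1 * real (gdist \<mu> u v) powr \<kappa>)"
    and c1: "0 \<le> c1" and ka: "0 < \<kappa>" and S0: "finite S0" "S0 \<subseteq> V"
    and gr: "\<forall>y\<in>S0. real (gdist \<mu> x0 y) \<le> r" and r: "0 \<le> r"
    and PS: "0 < (\<Sum>y\<in>S0. \<pi> y)" and m: "2 \<le> m" and yz: "y \<in> V" "z \<in> V"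
  shows "(qhk \<mu> m x0 y - qhk \<mu> m x0 z)\<^sup>2 \<le> c1 * real (gdist \<mu> y z) powr \<kappa> *
           (1 / (real (m div 2) * (\<Sum>y\<in>S0. \<pi> y)) + c1 * r powr \<kappa> / (real (m div 2))\<^sup>2)"
proof -
  define k where "k = m div 2"
  define PS where "PS = (\<Sum>y\<in>S0. \<pi> y)"
  define G where "G = c1 * real (gdist \<mu> y z) powr \<kappa>"
  have k: "1 \<le> k" "2 * k \<le> m" using m unfolding k_def by auto
  have kp: "0 < real k" using k by simp
  have PSp: "0 < PS" using PS PS_def by simp
  have G0: "0 \<le> G" unfolding G_def using c1 by simp
  have "(qhk \<mu> m x0 y - qhk \<mu> m x0 z)\<^sup>2 = ((1 * h m y + 1 * h (Suc m) y) - (1 * h m z + 1 * h (Suc m) z))\<^sup>2 / 4"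
    unfolding qhk_def by (simp add: power2_eq_square field_simps)
  also have "\<dots> \<le> G * D m / 4" using resF[OF Rb yz, of m] unfolding G_def by simp
  also have "\<dots> \<le> G * (c k / k) / 4"
  proof -
    have "D m \<le> D (2 * k)" using D_anti k by simp
    also have "\<dots> \<le> c k / k" using D_bound k by simp
    finally have "G * D m \<le> G * (c k / k)" using G0 by (rule mult_left_mono)
    then show ?thesis by simp
  qed
  also have "\<dots> \<le> G * ((4 / PS + 4 * c1 * r powr \<kappa> / k) / k) / 4"
    using ondiag[OF Rb c1 ka S0 gr r PS k(1)] G0 kp unfolding PS_def
    by (intro divide_right_mono mult_left_mono) auto
  also have "\<dots> = G * (1 / (real k * PS) + c1 * r powr \<kappa> / (real k)\<^sup>2)"
    using kp PSp by (simp add: field_simps power2_eq_square)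
  finally show ?thesis unfolding G_def k_def PS_def .
qed

end

lemma arith_bound:
  fixes D2 G R k PS \<beta> A d L \<gamma> a \<epsilon> c1 c3 :: real
  assumes D2: "D2 \<le> c1 * G * (1 / (k * PS) + c1 * R / k\<^sup>2)"
   and G: "0 \<le> G" "G \<le> A * d" and R: "0 \<le> R" "R \<le> A * L"
   and k: "\<gamma> * a / 4 \<le> k" and PS: "\<epsilon> * \<beta> < PS"
   and P: "A * \<beta> \<le> c3 * \<gamma>"
   and pos: "0 < \<beta>" "0 < A" "0 < c1" "0 < c3" "0 < \<epsilon>" "0 < a" "0 < \<gamma>" "0 \<le> d" "0 \<le> L"
  shows "\<beta>\<^sup>2 * D2 \<le> c1 * d * (4 * c3 / (a * \<epsilon>) + 16 * c1 * L * c3\<^sup>2 / a\<^sup>2)"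
proof -
  have ga: "0 < \<gamma> * a / 4" using pos by simp
  have k0: "0 < k" using ga k by linarith
  have PS0: "0 < PS" using PS pos by (smt (verit) mult_pos_pos)
  have "\<gamma> * a / 4 * (\<epsilon> * \<beta>) \<le> k * PS"
    using k PS pos ga k0 by (intro mult_mono) auto
  then have h1: "1 / (k * PS) \<le> 1 / (\<gamma> * a / 4 * (\<epsilon> * \<beta>))"
    using pos ga k0 PS0 by (intro divide_left_mono mult_pos_pos) auto
  have "(\<gamma> * a / 4)\<^sup>2 \<le> k\<^sup>2" using k ga by (intro power_mono) auto
  then have "R / k\<^sup>2 \<le> (A * L) / (\<gamma> * a / 4)\<^sup>2"
    using R ga k0 pos by (intro frac_le) auto
  then have h2: "c1 * R / k\<^sup>2 \<le> c1 * ((A * L) / (\<gamma> * a / 4)\<^sup>2)"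
    using pos by (simp add: mult_left_mono times_divide_eq_right[symmetric] del: times_divide_eq_right)
  have inner0: "0 \<le> 1 / (k * PS) + c1 * R / k\<^sup>2" using k0 PS0 R pos by simp
  have "D2 \<le> c1 * G * (1 / (k * PS) + c1 * R / k\<^sup>2)" by (rule D2)
  also have "\<dots> \<le> c1 * (A * d) * (1 / (\<gamma> * a / 4 * (\<epsilon> * \<beta>)) + c1 * ((A * L) / (\<gamma> * a / 4)\<^sup>2))"
    using G h1 h2 inner0 pos by (intro mult_mono add_mono) auto
  finally have D2b: "D2 \<le> \<dots>" .
  define u where "u = A * \<beta> / \<gamma>"
  have u: "0 \<le> u" "u \<le> c3" using P pos unfolding u_def by (auto simp: pos_divide_le_eq)
  have eq: "\<beta>\<^sup>2 * (c1 * (A * d) * (1 / (\<gamma> * a / 4 * (\<epsilon> * \<beta>)) + c1 * ((A * L) / (\<gamma> * a / 4)\<^sup>2)))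
     = c1 * d * (4 * u / (a * \<epsilon>) + 16 * c1 * L * u\<^sup>2 / a\<^sup>2)"
    unfolding u_def using pos by (simp add: field_simps power2_eq_square)
  have "\<beta>\<^sup>2 * D2 \<le> \<beta>\<^sup>2 * (c1 * (A * d) * (1 / (\<gamma> * a / 4 * (\<epsilon> * \<beta>)) + c1 * ((A * L) / (\<gamma> * a / 4)\<^sup>2)))"
    using D2b by (intro mult_left_mono) auto
  also have "\<dots> = c1 * d * (4 * u / (a * \<epsilon>) + 16 * c1 * L * u\<^sup>2 / a\<^sup>2)" by (rule eq)
  also have "\<dots> \<le> c1 * d * (4 * c3 / (a * \<epsilon>) + 16 * c1 * L * c3\<^sup>2 / a\<^sup>2)"
  proof -
    have "u\<^sup>2 \<le> c3\<^sup>2" using u by (intro power_mono) auto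
    then have "4 * u / (a * \<epsilon>) + 16 * c1 * L * u\<^sup>2 / a\<^sup>2 \<le> 4 * c3 / (a * \<epsilon>) + 16 * c1 * L * c3\<^sup>2 / a\<^sup>2"
      using u pos by (intro add_mono divide_right_mono mult_left_mono) auto
    then show ?thesis using pos by (intro mult_left_mono) auto
  qed
  finally show ?thesis .
qed

lemma core:
  fixes V :: "'a set" and \<mu> and \<alpha> \<beta> \<gamma> c1 c3 \<kappa> \<epsilon> C a t r0 \<delta> :: real
  assumes wgn: "weighted_graph V \<mu>" and \<rho>V: "\<rho> \<in> V"
   and Rb: "\<forall>u\<in>V. \<forall>v\<in>V. resistance \<mu> u v \<le> ereal (c1 * real (gdist \<mu> u v) powr \<kappa>)"
   and c1: "0 < c1" and c3: "0 < c3" and ka: "0 < \<kappa>"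
   and P: "\<alpha> powr \<kappa> * \<beta> \<le> c3 * \<gamma>"
   and \<alpha>p: "0 < \<alpha>" and \<beta>p: "0 < \<beta>" and \<epsilon>: "0 < \<epsilon>" and C: "0 \<le> C"
   and S0: "finite S0" "S0 \<subseteq> V" "\<epsilon> * \<beta> < (\<Sum>y\<in>S0. muv \<mu> y)"
   and gS0: "\<forall>s\<in>S0. real (gdist \<mu> \<rho> s) \<le> \<alpha> * C"
   and a: "0 < a" "a \<le> t" "4 \<le> \<gamma> * a"
   and r0: "0 < r0" and \<delta>: "0 < \<delta>"
   and x: "x \<in> gball V \<mu> \<rho> (\<alpha> * r0)" and y: "y \<in> gball V \<mu> \<rho> (\<alpha> * r0)"
   and z: "z \<in> gball V \<mu> \<rho> (\<alpha> * r0)"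
   and yz: "real (gdist \<mu> y z) \<le> \<alpha> * \<delta>"
  shows "\<beta> * \<bar>qhk \<mu> (nat \<lfloor>\<gamma> * t\<rfloor>) x y - qhk \<mu> (nat \<lfloor>\<gamma> * t\<rfloor>) x z\<bar>
     \<le> sqrt (c1 * \<delta> powr \<kappa> * (4 * c3 / (a * \<epsilon>) + 16 * c1 * ((r0 + C) powr \<kappa>) * c3\<^sup>2 / a\<^sup>2))"
proof -
  have xV: "x \<in> V" and yV: "y \<in> V" and zV: "z \<in> V" using x y z unfolding gball_def by auto
  interpret W: wg0 V \<mu> x using wgn xV by unfold_locales
  define m where "m = nat \<lfloor>\<gamma> * t\<rfloor>"
  define k where "k = m div 2"
  define PS where "PS = (\<Sum>y\<in>S0. muv \<mu> y)"
  define L0 where "L0 = r0 + C"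
  have \<gamma>p: "0 < \<gamma>" using a by (smt (verit) mult_nonpos_nonneg)
  have gt: "\<gamma> * a \<le> \<gamma> * t" using a \<gamma>p by simp
  have m1: "\<gamma> * t - 1 \<le> real m" unfolding m_def using gt a by linarith
  have m2: "2 \<le> m" using m1 gt a by linarith
  have "real m - 1 \<le> 2 * real k" unfolding k_def by linarith
  then have kb: "\<gamma> * a / 4 \<le> real k" using m1 gt a by linarith
  have PS0: "0 < PS" using S0(3) \<epsilon> \<beta>p PS_def by (smt (verit) mult_pos_pos)
  have L00: "0 \<le> L0" unfolding L0_def using r0 C by simp
  have gx: "\<forall>s\<in>S0. real (gdist \<mu> x s) \<le> \<alpha> * L0"
  proof
    fix s assume s: "s \<in> S0"
    then have sV: "s \<in> V" using S0 by blast
    have t1: "real (gdist \<mu> x s) \<le> real (gdist \<mu> x \<rho>) + real (gdist \<mu> \<rho> s)"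
      using W.gdist_tri[OF xV \<rho>V sV] by linarith
    have t2: "gdist \<mu> x \<rho> = gdist \<mu> \<rho> x" using W.gdist_sym[OF xV \<rho>V] .
    have t3: "real (gdist \<mu> \<rho> x) < \<alpha> * r0" using x unfolding gball_def by simp
    have "real (gdist \<mu> x s) < \<alpha> * r0 + real (gdist \<mu> \<rho> s)" using t1 t2 t3 by linarith
    moreover have "real (gdist \<mu> \<rho> s) \<le> \<alpha> * C" using gS0 s by blast
    ultimately show "real (gdist \<mu> x s) \<le> \<alpha> * L0" unfolding L0_def by (simp add: algebra_simps)
  qed
  have L0a: "0 \<le> \<alpha> * L0" using \<alpha>p L00 by simp
  have mg: "(qhk \<mu> m x y - qhk \<mu> m x z)\<^sup>2 \<le> c1 * real (gdist \<mu> y z) powr \<kappa> *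
           (1 / (real k * PS) + c1 * (\<alpha> * L0) powr \<kappa> / (real k)\<^sup>2)"
    using W.main_graph[OF Rb _ ka S0(1,2) gx L0a _ m2 yV zV] c1 PS0 unfolding k_def PS_def by simp
  have Gb: "real (gdist \<mu> y z) powr \<kappa> \<le> \<alpha> powr \<kappa> * \<delta> powr \<kappa>"
  proof -
    have "real (gdist \<mu> y z) powr \<kappa> \<le> (\<alpha> * \<delta>) powr \<kappa>" using yz ka by (intro powr_mono2) auto
    also have "\<dots> = \<alpha> powr \<kappa> * \<delta> powr \<kappa>" using \<alpha>p \<delta> by (simp add: powr_mult)
    finally show ?thesis .
  qed
  have Rq: "(\<alpha> * L0) powr \<kappa> = \<alpha> powr \<kappa> * L0 powr \<kappa>" using \<alpha>p L00 by (simp add: powr_mult)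
  have "\<beta>\<^sup>2 * (qhk \<mu> m x y - qhk \<mu> m x z)\<^sup>2 \<le> c1 * \<delta> powr \<kappa> * (4 * c3 / (a * \<epsilon>) + 16 * c1 * L0 powr \<kappa> * c3\<^sup>2 / a\<^sup>2)"
  proof (rule arith_bound[OF _ _ Gb _ _ kb _ P])
    show "(qhk \<mu> m x y - qhk \<mu> m x z)\<^sup>2 \<le> c1 * real (gdist \<mu> y z) powr \<kappa> * (1 / (real k * PS) + c1 * (\<alpha> powr \<kappa> * L0 powr \<kappa>) / (real k)\<^sup>2)"
      using mg Rq by simp
    show "\<epsilon> * \<beta> < PS" using S0 PS_def by simp
    show "\<alpha> powr \<kappa> * L0 powr \<kappa> \<le> \<alpha> powr \<kappa> * L0 powr \<kappa>" by simp
  qed (use \<beta>p \<alpha>p c1 c3 \<epsilon> a \<gamma>p \<delta> L00 in auto)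
  then have "(\<beta> * \<bar>qhk \<mu> m x y - qhk \<mu> m x z\<bar>)\<^sup>2 \<le> c1 * \<delta> powr \<kappa> * (4 * c3 / (a * \<epsilon>) + 16 * c1 * L0 powr \<kappa> * c3\<^sup>2 / a\<^sup>2)"
    by (simp add: power_mult_distrib)
  then show ?thesis unfolding m_def L0_def by (rule real_le_rsqrt)
qed

theorem proposition5p3:
  fixes F :: "'a::metric_space set" and \<nu> :: "'a measure" and \<rho> :: 'a
    and V :: "nat \<Rightarrow> 'a set" and \<mu> :: "nat \<Rightarrow> 'a \<Rightarrow> 'a \<Rightarrow> real"
    and \<alpha> \<beta> \<gamma> :: "nat \<Rightarrow> real"
  assumes F_compact: "\<forall>x r. r > 0 \<longrightarrow> compact (F \<inter> cball x r)"
    and rho_F: "\<rho> \<in> F"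
    and nu: "radon_full_support F \<nu>"
    and graphs: "\<forall>n\<ge>1. weighted_graph (V n) (\<mu> n) \<and> \<rho> \<in> V n"
    and seq_nonneg: "\<forall>n\<ge>1. 0 \<le> \<alpha> n \<and> 0 \<le> \<beta> n \<and> 0 \<le> \<gamma> n"
    and seq_div: "filterlim \<alpha> at_top sequentially" "filterlim \<beta> at_top sequentially"
                 "filterlim \<gamma> at_top sequentially"
    and A5i_lower: "\<exists>c>0. \<forall>n\<ge>1. \<forall>x\<in>V n. \<forall>y\<in>V n.
                       real (gdist (\<mu> n) x y) \<ge> c * \<alpha> n * dist x y"
    and A5i_upper: "\<exists>\<alpha>'::nat \<Rightarrow> real. (\<forall>n. 0 \<le> \<alpha>' n) \<and> \<alpha>' \<in> o(\<alpha>) \<and>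
                      (\<forall>r>0. \<exists>c'. \<exists>n0. \<forall>n\<ge>n0. \<forall>x\<in>V n \<inter> ball \<rho> r. \<forall>y\<in>V n \<inter> ball \<rho> r.
                          real (gdist (\<mu> n) x y) \<le> c' * \<alpha> n * dist x y + \<alpha>' n)"
    and A5ii: "\<forall>x\<in>F. \<forall>r>0.
                 ((\<lambda>n. nuG (V n) (\<mu> n) (ball x r) / ennreal (\<beta> n)) \<longlongrightarrow> emeasure \<nu> (ball x r))
                   sequentially"
    and A5iii: "\<exists>\<kappa>>0. \<exists>c1>0. \<exists>c2>0. \<exists>c3>0. \<exists>n0::nat. \<forall>n\<ge>n0.
                  (\<forall>x\<in>V n. \<forall>y\<in>V n. resistance (\<mu> n) x y \<le> ereal (c1 * real (gdist (\<mu> n) x y) powr \<kappa>)) \<and>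
                  c2 * \<gamma> n \<le> \<alpha> n powr \<kappa> * \<beta> n \<and> \<alpha> n powr \<kappa> * \<beta> n \<le> c3 * \<gamma> n"
  shows "\<forall>a b r::real. 0 < a \<longrightarrow> a \<le> b \<longrightarrow> 0 < r \<longrightarrow>
    ((\<lambda>\<delta>. limsup (\<lambda>n.
        Sup {ereal (\<beta> n * \<bar>qhk (\<mu> n) (nat \<lfloor>\<gamma> n * t\<rfloor>) x y - qhk (\<mu> n) (nat \<lfloor>\<gamma> n * t\<rfloor>) x z\<bar>) | x y z t.
               x \<in> gball (V n) (\<mu> n) \<rho> (\<alpha> n * r) \<and> y \<in> gball (V n) (\<mu> n) \<rho> (\<alpha> n * r) \<and>
               z \<in> gball (V n) (\<mu> n) \<rho> (\<alpha> n * r) \<and>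
               real (gdist (\<mu> n) y z) \<le> \<alpha> n * \<delta> \<and> t \<in> {a..b}}))
      \<longlongrightarrow> 0) (at_right 0)"
proof (intro allI impI)
  fix a b r :: real
  assume a0: "0 < a" and ab: "a \<le> b" and r0: "0 < r"
  obtain \<kappa> c1 c2 c3 n0 where ka: "0 < \<kappa>" and c1: "0 < c1" and c3: "0 < c3"
    and H3: "\<forall>n\<ge>n0. (\<forall>x\<in>V n. \<forall>y\<in>V n. resistance (\<mu> n) x y \<le> ereal (c1 * real (gdist (\<mu> n) x y) powr \<kappa>)) \<and>
                  c2 * \<gamma> n \<le> \<alpha> n powr \<kappa> * \<beta> n \<and> \<alpha> n powr \<kappa> * \<beta> n \<le> c3 * \<gamma> n"
    using A5iii by blast
  obtain \<alpha>' :: "nat \<Rightarrow> real" where \<alpha>'nn: "\<forall>n. 0 \<le> \<alpha>' n" and \<alpha>'o: "\<alpha>' \<in> o(\<alpha>)"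
    and up: "\<forall>r>0. \<exists>c'. \<exists>n0. \<forall>n\<ge>n0. \<forall>x\<in>V n \<inter> ball \<rho> r. \<forall>y\<in>V n \<inter> ball \<rho> r.
                          real (gdist (\<mu> n) x y) \<le> c' * \<alpha> n * dist x y + \<alpha>' n"
    using A5i_upper by blast
  obtain c' n1 where up1: "\<forall>n\<ge>n1. \<forall>x\<in>V n \<inter> ball \<rho> 1. \<forall>y\<in>V n \<inter> ball \<rho> 1.
                          real (gdist (\<mu> n) x y) \<le> c' * \<alpha> n * dist x y + \<alpha>' n"
    using up[rule_format, of 1] by auto
  define C where "C = \<bar>c'\<bar> + 1"
  have C0: "0 \<le> C" unfolding C_def by simp
  have fs: "\<forall>x\<in>F. \<forall>r>0. 0 < emeasure \<nu> (ball x r)" using nu unfolding radon_full_support_def by (elim conjE) assumption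
  have posm: "0 < emeasure \<nu> (ball \<rho> 1)" using fs rho_F by simp
  obtain e :: ennreal where e0: "0 < e" and eL: "e < emeasure \<nu> (ball \<rho> 1)" using dense[OF posm] by blast
  define \<epsilon> where "\<epsilon> = enn2real e"
  have etop: "e < top" using eL by (simp add: less_le_trans)
  have e\<epsilon>: "ennreal \<epsilon> = e" unfolding \<epsilon>_def using etop by simp
  have \<epsilon>0: "0 < \<epsilon>" using e0 e\<epsilon> by (metis ennreal_less_zero_iff)
  have E1: "eventually (\<lambda>n. e < nuG (V n) (\<mu> n) (ball \<rho> 1) / ennreal (\<beta> n)) sequentially"
    using order_tendstoD(1)[OF A5ii[rule_format, OF rho_F, of 1] eL] by simp
  have E3: "eventually (\<lambda>n. 1 \<le> \<alpha> n) sequentially" using seq_div(1) by (simp add: filterlim_at_top)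
  have E2: "eventually (\<lambda>n. \<alpha>' n \<le> \<alpha> n) sequentially"
    using landau_o.smallD[OF \<alpha>'o zero_less_one] E3
  proof eventually_elim
    case (elim n) then show ?case using \<alpha>'nn by simp
  qed
  have E4: "eventually (\<lambda>n. 1 \<le> \<beta> n) sequentially" using seq_div(2) by (simp add: filterlim_at_top)
  have E5: "eventually (\<lambda>n. 4 / a \<le> \<gamma> n) sequentially" using seq_div(3) by (simp add: filterlim_at_top)
  have E6: "eventually (\<lambda>n. max (max n0 n1) 1 \<le> n) sequentially" by (rule eventually_ge_at_top)
  have "eventually (\<lambda>n. (e < nuG (V n) (\<mu> n) (ball \<rho> 1) / ennreal (\<beta> n)) \<and> \<alpha>' n \<le> \<alpha> n \<and> 1 \<le> \<alpha> n
      \<and> 1 \<le> \<beta> n \<and> 4 / a \<le> \<gamma> n \<and> max (max n0 n1) 1 \<le> n) sequentially"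
    using E1 E2 E3 E4 E5 E6 by (intro eventually_conj) auto
  then obtain N where HN: "\<And>n. N \<le> n \<Longrightarrow> (e < nuG (V n) (\<mu> n) (ball \<rho> 1) / ennreal (\<beta> n)) \<and> \<alpha>' n \<le> \<alpha> n \<and> 1 \<le> \<alpha> n
      \<and> 1 \<le> \<beta> n \<and> 4 / a \<le> \<gamma> n \<and> max (max n0 n1) 1 \<le> n"
    unfolding eventually_sequentially by blast
  define bnd where "bnd = (\<lambda>\<delta>::real. sqrt (c1 * \<delta> powr \<kappa> * (4 * c3 / (a * \<epsilon>) + 16 * c1 * ((r + C) powr \<kappa>) * c3\<^sup>2 / a\<^sup>2)))"
  have main: "\<beta> n * \<bar>qhk (\<mu> n) (nat \<lfloor>\<gamma> n * t\<rfloor>) x y - qhk (\<mu> n) (nat \<lfloor>\<gamma> n * t\<rfloor>) x z\<bar> \<le> bnd \<delta>"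
    if n: "N \<le> n" and \<delta>: "0 < \<delta>" and x: "x \<in> gball (V n) (\<mu> n) \<rho> (\<alpha> n * r)"
      and y: "y \<in> gball (V n) (\<mu> n) \<rho> (\<alpha> n * r)" and z: "z \<in> gball (V n) (\<mu> n) \<rho> (\<alpha> n * r)"
      and yz: "real (gdist (\<mu> n) y z) \<le> \<alpha> n * \<delta>" and t: "t \<in> {a..b}"
    for n \<delta> x y z t
  proof -
    note hn = HN[OF n]
    have n1': "1 \<le> n" "n0 \<le> n" "n1 \<le> n" using hn by auto
    have wgn: "weighted_graph (V n) (\<mu> n)" and \<rho>V: "\<rho> \<in> V n" using graphs n1'(1) by auto
    have Rb: "\<forall>u\<in>V n. \<forall>v\<in>V n. resistance (\<mu> n) u v \<le> ereal (c1 * real (gdist (\<mu> n) u v) powr \<kappa>)"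
      using H3 n1'(2) by blast
    have P: "\<alpha> n powr \<kappa> * \<beta> n \<le> c3 * \<gamma> n" using H3 n1'(2) by blast
    have \<alpha>p: "0 < \<alpha> n" and \<beta>p: "0 < \<beta> n" using hn by auto
    have \<gamma>a: "4 \<le> \<gamma> n * a" using hn a0 by (simp add: field_simps)
    obtain S0 where S0: "finite S0" "S0 \<subseteq> ball \<rho> 1 \<inter> V n" "\<epsilon> * \<beta> n < (\<Sum>y\<in>S0. muv (\<mu> n) y)"
    proof (rule ccontr)
      assume "\<not> thesis"
      then have le: "\<And>S. finite S \<Longrightarrow> S \<subseteq> ball \<rho> 1 \<inter> V n \<Longrightarrow> (\<Sum>y\<in>S. muv (\<mu> n) y) \<le> \<epsilon> * \<beta> n"
        using that by force
      have "nuG (V n) (\<mu> n) (ball \<rho> 1) = (SUP S\<in>{S. finite S \<and> S \<subseteq> ball \<rho> 1 \<inter> V n}. (\<Sum>y\<in>S. ennreal (muv (\<mu> n) y)))"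
        unfolding nuG_def by (rule nonneg_infsum_complete) simp
      also have "\<dots> \<le> ennreal (\<epsilon> * \<beta> n)"
      proof (rule SUP_least)
        fix S assume "S \<in> {S. finite S \<and> S \<subseteq> ball \<rho> 1 \<inter> V n}"
        then have S: "finite S" "S \<subseteq> ball \<rho> 1 \<inter> V n" by auto
        have "(\<Sum>y\<in>S. ennreal (muv (\<mu> n) y)) = ennreal (\<Sum>y\<in>S. muv (\<mu> n) y)"
          using wg.pi_nonneg[OF wg.intro[OF wgn]] by (simp add: sum_ennreal)
        also have "\<dots> \<le> ennreal (\<epsilon> * \<beta> n)" by (rule ennreal_leI[OF le[OF S]])
        finally show "(\<Sum>y\<in>S. ennreal (muv (\<mu> n) y)) \<le> ennreal (\<epsilon> * \<beta> n)" .
      qed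
      finally have "nuG (V n) (\<mu> n) (ball \<rho> 1) / ennreal (\<beta> n) \<le> ennreal (\<epsilon> * \<beta> n) / ennreal (\<beta> n)"
        by (rule divide_right_mono_ennreal)
      also have "\<dots> = e" using \<beta>p \<epsilon>0 e\<epsilon> by (simp add: divide_ennreal)
      finally have "nuG (V n) (\<mu> n) (ball \<rho> 1) / ennreal (\<beta> n) \<le> e" .
      then show False using hn by (simp add: not_less[symmetric])
    qed
    have gS0: "\<forall>s\<in>S0. real (gdist (\<mu> n) \<rho> s) \<le> \<alpha> n * C"
    proof
      fix s assume s: "s \<in> S0"
      then have s': "s \<in> V n \<inter> ball \<rho> 1" using S0 by blast
      have \<rho>': "\<rho> \<in> V n \<inter> ball \<rho> 1" using \<rho>V by simp
      have d1: "dist \<rho> s < 1" using s' by simp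
      have "real (gdist (\<mu> n) \<rho> s) \<le> c' * \<alpha> n * dist \<rho> s + \<alpha>' n" using up1 n1'(3) \<rho>' s' by blast
      also have "c' * \<alpha> n * dist \<rho> s \<le> \<bar>c'\<bar> * \<alpha> n * dist \<rho> s"
        using \<alpha>p by (intro mult_right_mono) auto
      also have "\<bar>c'\<bar> * \<alpha> n * dist \<rho> s \<le> \<bar>c'\<bar> * \<alpha> n * 1"
        using \<alpha>p d1 by (intro mult_left_mono) auto
      finally show "real (gdist (\<mu> n) \<rho> s) \<le> \<alpha> n * C" using hn unfolding C_def by (simp add: algebra_simps)
    qed
    show ?thesis unfolding bnd_def
      by (rule core[OF wgn \<rho>V Rb c1 c3 ka P \<alpha>p \<beta>p \<epsilon>0 C0 S0(1) _ S0(3) gS0 a0 _ \<gamma>a r0 \<delta> x y z yz])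
        (use S0 t in auto)
  qed
  let ?S = "\<lambda>\<delta> n. {ereal (\<beta> n * \<bar>qhk (\<mu> n) (nat \<lfloor>\<gamma> n * t\<rfloor>) x y - qhk (\<mu> n) (nat \<lfloor>\<gamma> n * t\<rfloor>) x z\<bar>) | x y z t.
               x \<in> gball (V n) (\<mu> n) \<rho> (\<alpha> n * r) \<and> y \<in> gball (V n) (\<mu> n) \<rho> (\<alpha> n * r) \<and>
               z \<in> gball (V n) (\<mu> n) \<rho> (\<alpha> n * r) \<and>
               real (gdist (\<mu> n) y z) \<le> \<alpha> n * \<delta> \<and> t \<in> {a..b}}"
  have UB: "limsup (\<lambda>n. Sup (?S \<delta> n)) \<le> ereal (bnd \<delta>)" if \<delta>: "0 < \<delta>" for \<delta>
  proof (rule Limsup_bounded)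
    show "eventually (\<lambda>n. Sup (?S \<delta> n) \<le> ereal (bnd \<delta>)) sequentially"
      unfolding eventually_sequentially
    proof (intro exI allI impI)
      fix n assume n: "N \<le> n"
      show "Sup (?S \<delta> n) \<le> ereal (bnd \<delta>)"
      proof (rule Sup_least)
        fix u assume "u \<in> ?S \<delta> n"
        then obtain x y z t where u: "u = ereal (\<beta> n * \<bar>qhk (\<mu> n) (nat \<lfloor>\<gamma> n * t\<rfloor>) x y - qhk (\<mu> n) (nat \<lfloor>\<gamma> n * t\<rfloor>) x z\<bar>)"
          and c: "x \<in> gball (V n) (\<mu> n) \<rho> (\<alpha> n * r)" "y \<in> gball (V n) (\<mu> n) \<rho> (\<alpha> n * r)"
            "z \<in> gball (V n) (\<mu> n) \<rho> (\<alpha> n * r)" "real (gdist (\<mu> n) y z) \<le> \<alpha> n * \<delta>" "t \<in> {a..b}"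
          by blast
        show "u \<le> ereal (bnd \<delta>)" unfolding u using main[OF n \<delta> c] by simp
      qed
    qed
  qed
  have LB: "0 \<le> limsup (\<lambda>n. Sup (?S \<delta> n))" if \<delta>: "0 < \<delta>" for \<delta>
  proof (rule le_Limsup)
    show "sequentially \<noteq> bot" by simp
    show "eventually (\<lambda>n. 0 \<le> Sup (?S \<delta> n)) sequentially"
      unfolding eventually_sequentially
    proof (intro exI allI impI)
      fix n assume n: "N \<le> n"
      note hn = HN[OF n]
      have wgn: "weighted_graph (V n) (\<mu> n)" and \<rho>V: "\<rho> \<in> V n" using graphs hn by auto
      have g0: "gdist (\<mu> n) \<rho> \<rho> = 0" using wg.gdist_self[OF wg.intro[OF wgn]] .
      have \<rho>b: "\<rho> \<in> gball (V n) (\<mu> n) \<rho> (\<alpha> n * r)" unfolding gball_def using \<rho>V g0 hn r0 by simp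
      have "ereal (\<beta> n * \<bar>qhk (\<mu> n) (nat \<lfloor>\<gamma> n * a\<rfloor>) \<rho> \<rho> - qhk (\<mu> n) (nat \<lfloor>\<gamma> n * a\<rfloor>) \<rho> \<rho>\<bar>) \<in> ?S \<delta> n"
        using \<rho>b g0 hn \<delta> ab by fastforce
      then show "0 \<le> Sup (?S \<delta> n)" by (rule Sup_upper2) simp
    qed
  qed
  have lim: "((\<lambda>\<delta>. ereal (bnd \<delta>)) \<longlongrightarrow> 0) (at_right 0)"
  proof -
    have "((\<lambda>\<delta>::real. \<delta> powr \<kappa>) \<longlongrightarrow> 0) (at_right 0)"
      by (rule tendsto_zero_powrI[OF _ tendsto_const _ ka])
        (auto simp: eventually_at_right_less intro: tendsto_ident_at eventually_mono[OF eventually_at_right_less[of 0]])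
    then have "((\<lambda>\<delta>. bnd \<delta>) \<longlongrightarrow> sqrt (c1 * 0 * (4 * c3 / (a * \<epsilon>) + 16 * c1 * ((r + C) powr \<kappa>) * c3\<^sup>2 / a\<^sup>2))) (at_right 0)"
      unfolding bnd_def by (intro tendsto_intros)
    then have "((\<lambda>\<delta>. bnd \<delta>) \<longlongrightarrow> 0) (at_right 0)" by simp
    then show ?thesis by (simp add: zero_ereal_def lim_ereal)
  qed
  show "((\<lambda>\<delta>. limsup (\<lambda>n. Sup (?S \<delta> n))) \<longlongrightarrow> 0) (at_right 0)"
  proof (rule tendsto_sandwich[OF _ _ tendsto_const lim])
    show "eventually (\<lambda>\<delta>. 0 \<le> limsup (\<lambda>n. Sup (?S \<delta> n))) (at_right (0::real))"
      using eventually_at_right_less[of "0::real"] by (rule eventually_mono) (rule LB)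
    show "eventually (\<lambda>\<delta>. limsup (\<lambda>n. Sup (?S \<delta> n)) \<le> ereal (bnd \<delta>)) (at_right (0::real))"
      using eventually_at_right_less[of "0::real"] by (rule eventually_mono) (rule UB)
  qed
qed

end
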